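(* Let $\mathcal D$ be universal, $\mathrm M=(M,d)\in\mathfrak U_{\mathcal D}$, and $r\in\mathcal D$, $r>0$, with $(r,2r]\cap\mathcal D=\emptyset$. Then for any three $\sim_r$-equivalence classes $A,B,C$ of $M$, $d_{\min}(B,C)\le d_{\min}(A,B)+d_{\min}(A,C)$; that is, $d_{\min}$ is a metric on the set $M/\!\sim_r$ of equivalence classes.
   Context: $\mathcal D$ is a finite subset of $\mathbb R_{\ge0}$ containing $0$. $\mathfrak U_{\mathcal D}$ is the class of countable homogeneous metric spaces (every isometry between finite subspaces extends to an isometry of the space onto itself) with distance set exactly $\mathcal D$ into which every finite metric space with distances in $\mathcal D$ embeds isometrically; $\mathcal D$ is universal if this class is nonempty. $x\sim_r y$ iff $d(x,y)\le r$ (an equivalence relation under the hypothesis on $r$). For $A,B\subseteq M$, $d_{\min}(A,B)=\min\{d(a,b):a\in A,b\in B\}$. *)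

theory Defs
  imports "HOL-Analysis.Analysis"
begin

definition metric_on :: "'a set \<Rightarrow> ('a \<Rightarrow> 'a \<Rightarrow> real) \<Rightarrow> bool" where
  "metric_on M d \<longleftrightarrow>
     (\<forall>x\<in>M. \<forall>y\<in>M. 0 \<le> d x y) \<and>
     (\<forall>x\<in>M. \<forall>y\<in>M. d x y = 0 \<longleftrightarrow> x = y) \<and>
     (\<forall>x\<in>M. \<forall>y\<in>M. d x y = d y x) \<and>
     (\<forall>x\<in>M. \<forall>y\<in>M. \<forall>z\<in>M. d x z \<le> d x y + d y z)"

definition dist_set :: "'a set \<Rightarrow> ('a \<Rightarrow> 'a \<Rightarrow> real) \<Rightarrow> real set" where
  "dist_set M d = {d x y | x y. x \<in> M \<and> y \<in> M}"

definition homogeneous :: "'a set \<Rightarrow> ('a \<Rightarrow> 'a \<Rightarrow> real) \<Rightarrow> bool" where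
  "homogeneous M d \<longleftrightarrow>
     (\<forall>A f. finite A \<and> A \<subseteq> M \<and> f ` A \<subseteq> M \<and>
            (\<forall>x\<in>A. \<forall>y\<in>A. d (f x) (f y) = d x y) \<longrightarrow>
        (\<exists>g. bij_betw g M M \<and> (\<forall>x\<in>M. \<forall>y\<in>M. d (g x) (g y) = d x y) \<and>
             (\<forall>x\<in>A. g x = f x)))"

text \<open>Every finite metric space with distances in D embeds isometrically into (M,d).
  Finite metric spaces are represented (up to isometry) on finite subsets of nat.\<close>
definition finitely_universal :: "real set \<Rightarrow> 'a set \<Rightarrow> ('a \<Rightarrow> 'a \<Rightarrow> real) \<Rightarrow> bool" where
  "finitely_universal D M d \<longleftrightarrow>
     (\<forall>(F::nat set) \<delta>. finite F \<and> metric_on F \<delta> \<and> (\<forall>x\<in>F. \<forall>y\<in>F. \<delta> x y \<in> D) \<longrightarrow>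
        (\<exists>e. e ` F \<subseteq> M \<and> (\<forall>x\<in>F. \<forall>y\<in>F. d (e x) (e y) = \<delta> x y)))"

definition in_U :: "real set \<Rightarrow> 'a set \<Rightarrow> ('a \<Rightarrow> 'a \<Rightarrow> real) \<Rightarrow> bool" where
  "in_U D M d \<longleftrightarrow> countable M \<and> metric_on M d \<and> homogeneous M d \<and>
     dist_set M d = D \<and> finitely_universal D M d"

text \<open>D is universal if U_D is nonempty (countable spaces can be taken on subsets of nat).\<close>
definition universal_dset :: "real set \<Rightarrow> bool" where
  "universal_dset D \<longleftrightarrow> (\<exists>(M::nat set) d. in_U D M d)"

definition r_class :: "'a set \<Rightarrow> ('a \<Rightarrow> 'a \<Rightarrow> real) \<Rightarrow> real \<Rightarrow> 'a \<Rightarrow> 'a set" where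
  "r_class M d r x = {y \<in> M. d x y \<le> r}"

definition r_classes :: "'a set \<Rightarrow> ('a \<Rightarrow> 'a \<Rightarrow> real) \<Rightarrow> real \<Rightarrow> 'a set set" where
  "r_classes M d r = r_class M d r ` M"

definition dmin :: "('a \<Rightarrow> 'a \<Rightarrow> real) \<Rightarrow> 'a set \<Rightarrow> 'a set \<Rightarrow> real" where
  "dmin d A B = Min {d a b | a b. a \<in> A \<and> b \<in> B}"

end

theory Submission imports Defs begin

definition del4 :: "real \<Rightarrow> real \<Rightarrow> real \<Rightarrow> nat \<Rightarrow> nat \<Rightarrow> real" where
  "del4 s t u i j = (if i = j then 0
     else if (i=0 \<and> j=1) \<or> (i=1 \<and> j=0) then u
     else if (i=0 \<and> j=2) \<or> (i=2 \<and> j=0) then s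
     else if (i=1 \<and> j=2) \<or> (i=2 \<and> j=1) then t
     else if (i=1 \<and> j=3) \<or> (i=3 \<and> j=1) then s
     else if (i=0 \<and> j=3) \<or> (i=3 \<and> j=0) then t
     else u)"

lemma del4_metric:
  assumes "0 < s" "0 < t" "0 < u" "s \<le> t + u" "t \<le> s + u" "u \<le> s + t"
  shows "metric_on {0,1,2,3} (del4 s t u)"
  using assms unfolding metric_on_def del4_def by auto

lemma inU_facts:
  assumes "in_U D M d"
  shows "metric_on M d" "homogeneous M d" "finitely_universal D M d"
    "\<And>x y. x \<in> M \<Longrightarrow> y \<in> M \<Longrightarrow> d x y \<in> D"
  using assms unfolding in_U_def dist_set_def by auto

lemma swap_point:
  assumes U: "in_U D M d" and a: "a \<in> M" and a': "a' \<in> M" and b: "b \<in> M"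
    and aa: "d a a' \<le> r" and r0: "0 \<le> r"
  shows "\<exists>y\<in>M. d a' y = d a b \<and> d y a = d a' b \<and> d b y \<le> r"
proof -
  have met: "metric_on M d" and hom: "homogeneous M d" and fu: "finitely_universal D M d"
    and inD: "\<And>x y. x \<in> M \<Longrightarrow> y \<in> M \<Longrightarrow> d x y \<in> D"
    using inU_facts[OF U] by auto
  have d0: "\<And>x y. x \<in> M \<Longrightarrow> y \<in> M \<Longrightarrow> d x y = 0 \<longleftrightarrow> x = y"
    using met unfolding metric_on_def by auto
  have dsym: "\<And>x y. x \<in> M \<Longrightarrow> y \<in> M \<Longrightarrow> d x y = d y x"
    using met unfolding metric_on_def by auto
  have dnn: "\<And>x y. x \<in> M \<Longrightarrow> y \<in> M \<Longrightarrow> 0 \<le> d x y"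
    using met unfolding metric_on_def by auto
  have tri: "\<And>x y z. x \<in> M \<Longrightarrow> y \<in> M \<Longrightarrow> z \<in> M \<Longrightarrow> d x z \<le> d x y + d y z"
    using met unfolding metric_on_def by auto
  have dz: "\<And>x. x \<in> M \<Longrightarrow> d x x = 0" using d0 by auto
  define s where "s = d a b"
  define t where "t = d a' b"
  define u where "u = d a a'"
  show ?thesis
  proof (cases "a = a'")
    case True
    then show ?thesis using b a dz r0 dsym by (intro bexI[of _ b]) auto
  next
    case ne: False
    show ?thesis
    proof (cases "a = b")
      case True
      then show ?thesis using a a' dz dsym aa by (intro bexI[of _ a']) auto
    next
      case nab: False
      show ?thesis
      proof (cases "a' = b")
        case True
        then show ?thesis using a a' dz dsym aa by (intro bexI[of _ a]) auto
      next
        case nab': False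
        have s0: "0 < s" using nab d0 dnn a b unfolding s_def by (metis order_le_less)
        have t0: "0 < t" using nab' d0 dnn a' b unfolding t_def by (metis order_le_less)
        have u0: "0 < u" using ne d0 dnn a a' unfolding u_def by (metis order_le_less)
        have h1: "s \<le> t + u" unfolding s_def t_def u_def using tri[OF a a' b] by simp
        have h2: "t \<le> s + u" unfolding s_def t_def u_def using tri[OF a' a b] dsym[OF a a'] by simp
        have h3: "u \<le> s + t" unfolding s_def t_def u_def using tri[OF a b a'] dsym[OF a' b] by simp
        have mF: "metric_on {0,1,2,3} (del4 s t u)" using del4_metric[OF s0 t0 u0 h1 h2 h3] .
        have DF: "\<forall>x\<in>{0,1,2,3::nat}. \<forall>y\<in>{0,1,2,3}. del4 s t u x y \<in> D"
          using inD[OF a b] inD[OF a' b] inD[OF a a'] inD[OF a a] d0[OF a a]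
          unfolding s_def t_def u_def del4_def by auto
        have finF: "finite {0,1,2,3::nat}" by simp
        have "\<exists>e. e ` {0,1,2,3::nat} \<subseteq> M \<and> (\<forall>x\<in>{0,1,2,3::nat}. \<forall>y\<in>{0,1,2,3}. d (e x) (e y) = del4 s t u x y)"
          apply (rule fu[unfolded finitely_universal_def, rule_format])
          using finF mF DF by blast
        then obtain e where eM: "e ` {0,1,2,3::nat} \<subseteq> M"
          and eiso: "\<forall>x\<in>{0,1,2,3::nat}. \<forall>y\<in>{0,1,2,3}. d (e x) (e y) = del4 s t u x y"
          by blast
        have e01: "d (e 0) (e 1) = u" and e02: "d (e 0) (e 2) = s" and e12: "d (e 1) (e 2) = t"
          and e31: "d (e 3) (e 1) = s" and e30: "d (e 3) (e 0) = t" and e32: "d (e 3) (e 2) = u"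
          and e10: "d (e 1) (e 0) = u" and e20: "d (e 2) (e 0) = s" and e21: "d (e 2) (e 1) = t"
          and e00: "d (e 0) (e 0) = 0" and e11: "d (e 1) (e 1) = 0" and e22: "d (e 2) (e 2) = 0"
          using eiso unfolding del4_def by auto
        have eM': "e 0 \<in> M" "e 1 \<in> M" "e 2 \<in> M" "e 3 \<in> M" using eM by auto
        have n01: "e 0 \<noteq> e 1" using e01 u0 e00 by auto
        have n02: "e 0 \<noteq> e 2" using e02 s0 e00 by auto
        have n12: "e 1 \<noteq> e 2" using e12 t0 e11 by auto
        define f where "f x = (if x = e 0 then a else if x = e 1 then a' else b)" for x
        have f0: "f (e 0) = a" and f1: "f (e 1) = a'" and f2: "f (e 2) = b"
          using n01 n02 n12 unfolding f_def by auto
        have fin: "finite {e 0, e 1, e 2}" by simp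
        have sub: "{e 0, e 1, e 2} \<subseteq> M" using eM' by auto
        have fsub: "f ` {e 0, e 1, e 2} \<subseteq> M" using f0 f1 f2 a a' b by auto
        have ba: "d b a = s" and a'a: "d a' a = u" and ba': "d b a' = t"
          using dsym a a' b unfolding s_def t_def u_def by auto
        have fiso: "\<forall>x\<in>{e 0, e 1, e 2}. \<forall>y\<in>{e 0, e 1, e 2}. d (f x) (f y) = d x y"
          using f0 f1 f2 e01 e02 e12 e10 e20 e21 e00 e11 e22 dz a a' b ba a'a ba'
          unfolding s_def t_def u_def by auto
        have "\<exists>g. bij_betw g M M \<and> (\<forall>x\<in>M. \<forall>y\<in>M. d (g x) (g y) = d x y) \<and>
             (\<forall>x\<in>{e 0, e 1, e 2}. g x = f x)"
          apply (rule hom[unfolded homogeneous_def, rule_format])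
          using fin sub fsub fiso by blast
        then obtain g where gbij: "bij_betw g M M" and giso: "\<forall>x\<in>M. \<forall>y\<in>M. d (g x) (g y) = d x y"
          and gf: "\<forall>x\<in>{e 0, e 1, e 2}. g x = f x"
          by blast
        have g0: "g (e 0) = a" and g1: "g (e 1) = a'" and g2: "g (e 2) = b"
          using gf f0 f1 f2 by auto
        define y where "y = g (e 3)"
        have yM: "y \<in> M" using gbij eM' unfolding y_def bij_betw_def by auto
        have i13: "d (g (e 1)) (g (e 3)) = d (e 1) (e 3)" using giso eM' by blast
        have i30: "d (g (e 3)) (g (e 0)) = d (e 3) (e 0)" using giso eM' by blast
        have i23: "d (g (e 2)) (g (e 3)) = d (e 2) (e 3)" using giso eM' by blast
        have "d (e 1) (e 3) = s" using dsym[OF eM'(2) eM'(4)] e31 by simp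
        moreover have "d (e 2) (e 3) = u" using dsym[OF eM'(3) eM'(4)] e32 by simp
        ultimately have "d a' y = s" "d y a = t" "d b y = u"
          using i13 i30 i23 e30 g0 g1 g2 unfolding y_def by auto
        then show ?thesis using yM aa unfolding s_def t_def u_def by auto
      qed
    qed
  qed
qed


lemma metric_tri:
  assumes "metric_on M d" "x \<in> M" "y \<in> M" "z \<in> M"
  shows "d x z \<le> d x y + d y z"
proof -
  have "\<forall>x\<in>M. \<forall>y\<in>M. \<forall>z\<in>M. d x z \<le> d x y + d y z"
    using assms(1) unfolding metric_on_def by (rule conjunct2[THEN conjunct2, THEN conjunct2])
  thus ?thesis using assms(2-4) by blast
qed

lemma trans_r:
  assumes U: "in_U D M d" and gap: "{r<..2*r} \<inter> D = {}"
    and x: "x \<in> M" and y: "y \<in> M" and z: "z \<in> M"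
    and xy: "d x y \<le> r" and yz: "d y z \<le> r"
  shows "d x z \<le> r"
proof -
  have met: "metric_on M d" and inD: "d x z \<in> D" using inU_facts[OF U] x z by auto
  have "d x z \<le> d x y + d y z" using metric_tri[OF met x y z] .
  hence "d x z \<le> 2 * r" using xy yz by linarith
  moreover have "d x z \<notin> {r<..2*r}" using inD gap by blast
  ultimately show ?thesis by auto
qed

lemma dmin_props:
  assumes U: "in_U D M d" and fD: "finite D" and A: "A \<subseteq> M" "A \<noteq> {}" and B: "B \<subseteq> M" "B \<noteq> {}"
  shows "\<exists>a\<in>A. \<exists>b\<in>B. dmin d A B = d a b"
    and "\<And>a b. a \<in> A \<Longrightarrow> b \<in> B \<Longrightarrow> dmin d A B \<le> d a b"
proof -
  let ?S = "{d a b | a b. a \<in> A \<and> b \<in> B}"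
  have "?S \<subseteq> D"
  proof
    fix v assume "v \<in> ?S"
    then obtain a b where "v = d a b" "a \<in> A" "b \<in> B" by blast
    thus "v \<in> D" using inU_facts(4)[OF U] A(1) B(1) by auto
  qed
  hence fin: "finite ?S" using fD finite_subset by blast
  have ne: "?S \<noteq> {}" using A B by blast
  have "dmin d A B \<in> ?S" unfolding dmin_def using Min_in[OF fin ne] .
  thus "\<exists>a\<in>A. \<exists>b\<in>B. dmin d A B = d a b" by blast
  show "\<And>a b. a \<in> A \<Longrightarrow> b \<in> B \<Longrightarrow> dmin d A B \<le> d a b"
    unfolding dmin_def using fin by (intro Min_le) auto
qed

lemma metric_zero:
  assumes "metric_on M d" "x \<in> M"
  shows "d x x = 0"
proof -
  have "\<forall>x\<in>M. \<forall>y\<in>M. d x y = 0 \<longleftrightarrow> x = y"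
    using assms(1) unfolding metric_on_def by (rule conjunct2[THEN conjunct1])
  thus ?thesis using assms(2) by blast
qed

lemma metric_sym:
  assumes "metric_on M d" "x \<in> M" "y \<in> M"
  shows "d x y = d y x"
proof -
  have "\<forall>x\<in>M. \<forall>y\<in>M. d x y = d y x"
    using assms(1) unfolding metric_on_def by (rule conjunct2[THEN conjunct2, THEN conjunct1])
  thus ?thesis using assms(2,3) by blast
qed

lemma class_sub: "r_class M d r x \<subseteq> M" unfolding r_class_def by auto

lemma class_ne: assumes U: "in_U D M d" "x \<in> M" "0 \<le> r" shows "x \<in> r_class M d r x"
  using metric_zero[OF inU_facts(1)[OF U(1)] U(2)] U(2,3) unfolding r_class_def by simp

lemma class_close:
  assumes U: "in_U D M d" and gap: "{r<..2*r} \<inter> D = {}" and x: "x \<in> M"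
    and a: "a \<in> r_class M d r x" and b: "b \<in> r_class M d r x"
  shows "d a b \<le> r"
proof -
  have aM: "a \<in> M" "d x a \<le> r" and bM: "b \<in> M" "d x b \<le> r" using a b unfolding r_class_def by auto
  have "d a x = d x a" using metric_sym[OF inU_facts(1)[OF U] aM(1) x] .
  thus ?thesis using trans_r[OF U gap aM(1) x bM(1)] aM bM by auto
qed

lemma class_eq:
  assumes U: "in_U D M d" and gap: "{r<..2*r} \<inter> D = {}" and x: "x \<in> M" and z: "z \<in> M"
    and xz: "d x z \<le> r"
  shows "r_class M d r x = r_class M d r z"
proof -
  have zx: "d z x \<le> r" using metric_sym[OF inU_facts(1)[OF U] x z] xz by simp
  show ?thesis unfolding r_class_def
  proof (intro equalityI subsetI)
    fix y assume "y \<in> {y \<in> M. d x y \<le> r}"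
    hence y: "y \<in> M" "d x y \<le> r" by auto
    thus "y \<in> {y \<in> M. d z y \<le> r}" using trans_r[OF U gap z x y(1) zx y(2)] by auto
  next
    fix y assume "y \<in> {y \<in> M. d z y \<le> r}"
    hence y: "y \<in> M" "d z y \<le> r" by auto
    thus "y \<in> {y \<in> M. d x y \<le> r}" using trans_r[OF U gap x z y(1) xz y(2)] by auto
  qed
qed

theorem lemma3p3:
  fixes D :: "real set" and M :: "'a set" and d :: "'a \<Rightarrow> 'a \<Rightarrow> real" and r :: real
  assumes "finite D" and "0 \<in> D" and "\<forall>x\<in>D. 0 \<le> x"
    and "universal_dset D"
    and "in_U D M d"
    and "r \<in> D" and "0 < r" and "{r<..2*r} \<inter> D = {}"
  shows "(\<forall>A\<in>r_classes M d r. \<forall>B\<in>r_classes M d r. \<forall>C\<in>r_classes M d r.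
            dmin d B C \<le> dmin d A B + dmin d A C)
         \<and> metric_on (r_classes M d r) (dmin d)"
proof -
  note U = assms(5) and gap = assms(8) and fD = assms(1)
  have r0: "0 \<le> r" using assms(7) by simp
  have met: "metric_on M d" using inU_facts[OF U] by auto
  have dsym: "\<And>x y. x \<in> M \<Longrightarrow> y \<in> M \<Longrightarrow> d x y = d y x"
    using met unfolding metric_on_def by auto
  have dnn: "\<And>x y. x \<in> M \<Longrightarrow> y \<in> M \<Longrightarrow> 0 \<le> d x y"
    using met unfolding metric_on_def by auto
  have d0: "\<And>x y. x \<in> M \<Longrightarrow> y \<in> M \<Longrightarrow> d x y = 0 \<longleftrightarrow> x = y"
    using met unfolding metric_on_def by auto
  have tri: "\<And>x y z. x \<in> M \<Longrightarrow> y \<in> M \<Longrightarrow> z \<in> M \<Longrightarrow> d x z \<le> d x y + d y z"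
    using met unfolding metric_on_def by auto
  have cls: "\<exists>x\<in>M. A = r_class M d r x" if "A \<in> r_classes M d r" for A
    using that unfolding r_classes_def by auto
  have csub: "A \<subseteq> M" "A \<noteq> {}" if hA: "A \<in> r_classes M d r" for A
  proof -
    obtain x where x: "x \<in> M" "A = r_class M d r x" using cls[OF hA] by blast
    show "A \<subseteq> M" using x(2) class_sub by simp
    show "A \<noteq> {}" using x(2) class_ne[OF U x(1) r0] by auto
  qed
  have part1: "dmin d B C \<le> dmin d A B + dmin d A C"
    if A: "A \<in> r_classes M d r" and B: "B \<in> r_classes M d r" and C: "C \<in> r_classes M d r" for A B C
  proof -
    obtain a b where a: "a \<in> A" and b: "b \<in> B" and ab: "dmin d A B = d a b"
      using dmin_props(1)[OF U fD csub[OF A] csub[OF B]] by blast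
    obtain a' c where a': "a' \<in> A" and c: "c \<in> C" and ac: "dmin d A C = d a' c"
      using dmin_props(1)[OF U fD csub[OF A] csub[OF C]] by blast
    obtain x where x: "x \<in> M" "A = r_class M d r x" using cls[OF A] by blast
    have aa: "d a a' \<le> r" using class_close[OF U gap x(1)] a a' x(2) by blast
    have aM: "a \<in> M" "a' \<in> M" "b \<in> M" "c \<in> M" using a a' b c csub[OF A] csub[OF B] csub[OF C] by auto
    obtain y where yM: "y \<in> M" and y1: "d a' y = d a b" and y3: "d b y \<le> r"
      using swap_point[OF U aM(1) aM(2) aM(3) aa r0] by blast
    obtain z where z: "z \<in> M" "B = r_class M d r z" using cls[OF B] by blast
    have "d z b \<le> r" using b z unfolding r_class_def by auto
    hence "d z y \<le> r" using trans_r[OF U gap z(1) aM(3) yM] y3 by blast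
    hence yB: "y \<in> B" using z yM unfolding r_class_def by auto
    have "dmin d B C \<le> d y c" using dmin_props(2)[OF U fD csub[OF B] csub[OF C] yB c] .
    also have "\<dots> \<le> d y a' + d a' c" using tri[OF yM aM(2) aM(4)] .
    also have "\<dots> = dmin d A B + dmin d A C" using ab ac y1 dsym[OF yM aM(2)] by simp
    finally show ?thesis .
  qed
  have dsymm: "dmin d A B = dmin d B A" if "A \<subseteq> M" "B \<subseteq> M" for A B
  proof -
    have "{d a b | a b. a \<in> A \<and> b \<in> B} = {d a b | a b. a \<in> B \<and> b \<in> A}"
    proof (intro equalityI subsetI)
      fix v assume "v \<in> {d a b | a b. a \<in> A \<and> b \<in> B}"
      then obtain a b where v: "v = d a b" "a \<in> A" "b \<in> B" by blast
      have "d a b = d b a" using dsym that v(2,3) by blast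
      thus "v \<in> {d a b | a b. a \<in> B \<and> b \<in> A}" using v by blast
    next
      fix v assume "v \<in> {d a b | a b. a \<in> B \<and> b \<in> A}"
      then obtain a b where v: "v = d a b" "a \<in> B" "b \<in> A" by blast
      have "d a b = d b a" using dsym that v(2,3) by blast
      thus "v \<in> {d a b | a b. a \<in> A \<and> b \<in> B}" using v by blast
    qed
    thus ?thesis unfolding dmin_def by simp
  qed
  have mt: "metric_on (r_classes M d r) (dmin d)"
    unfolding metric_on_def
  proof (intro conjI ballI)
    fix A B assume A: "A \<in> r_classes M d r" and B: "B \<in> r_classes M d r"
    obtain a b where a: "a \<in> A" and b: "b \<in> B" and ab: "dmin d A B = d a b"
      using dmin_props(1)[OF U fD csub[OF A] csub[OF B]] by blast
    have aM: "a \<in> M" "b \<in> M" using a b csub[OF A] csub[OF B] by auto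
    show "0 \<le> dmin d A B" using ab dnn[OF aM] by simp
    show "dmin d A B = dmin d B A" using dsymm[OF csub(1)[OF A] csub(1)[OF B]] .
    show "dmin d A B = 0 \<longleftrightarrow> A = B"
    proof
      assume "dmin d A B = 0"
      hence "a = b" using ab d0[OF aM] by simp
      obtain x where x: "x \<in> M" "A = r_class M d r x" using cls[OF A] by blast
      obtain z where z: "z \<in> M" "B = r_class M d r z" using cls[OF B] by blast
      have "d x a \<le> r" "d z a \<le> r" using a b x z \<open>a = b\<close> unfolding r_class_def by auto
      moreover have "d a z = d z a" using dsym[OF aM(1) z(1)] .
      ultimately have "d x z \<le> r" using trans_r[OF U gap x(1) aM(1) z(1)] by simp
      thus "A = B" using class_eq[OF U gap x(1) z(1)] x z by simp
    next
      assume "A = B"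
      hence "dmin d A B \<le> d a a" using dmin_props(2)[OF U fD csub[OF A] csub[OF B] a] a by auto
      thus "dmin d A B = 0" using d0[OF aM(1) aM(1)] ab dnn[OF aM] by simp
    qed
  next
    fix A B C assume A: "A \<in> r_classes M d r" and B: "B \<in> r_classes M d r" and C: "C \<in> r_classes M d r"
    have "dmin d A C \<le> dmin d B A + dmin d B C" using part1[OF B A C] .
    moreover have "dmin d B A = dmin d A B" using dsymm[OF csub(1)[OF B] csub(1)[OF A]] .
    ultimately show "dmin d A C \<le> dmin d A B + dmin d B C" by linarith
  qed
  have all: "\<forall>A\<in>r_classes M d r. \<forall>B\<in>r_classes M d r. \<forall>C\<in>r_classes M d r.
            dmin d B C \<le> dmin d A B + dmin d A C"
  proof (intro ballI)
    fix A B C assume "A \<in> r_classes M d r" "B \<in> r_classes M d r" "C \<in> r_classes M d r"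
    thus "dmin d B C \<le> dmin d A B + dmin d A C" by (rule part1)
  qed
  show ?thesis using all mt by (rule conjI)
qed

end
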